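(* In the single expert committee under liquid democracy, there is a neutral strategy profile that maximizes the probability that the outcome matches the state among all neutral strategy profiles and under which every nonexpert who does not abstain holds at most one vote.
   Context: Single expert committee: $N$ voters with $N$ odd, all independent (payoff 1 if the outcome matches the state, $A$ with $a$ and $B$ with $b$, else 0); $N-1$ nonexperts of precision $q\in(1/2,1)$ and one expert of precision $r\in(q,1)$; prior $\Pr(\omega=a)=1/2$ for state $\omega\in\{a,b\}$; voter $i$ observes private signal $s_i$ with $\Pr(s_i=\omega\mid\omega)=q_i$, conditionally independent; precisions are common knowledge. Outcome: simple majority of votes cast, ties broken uniformly at random. Liquid democracy: each voter maps her signal to vote $A$, vote $B$, abstain, or delegate to another voter; delegation is transitive, votes in a delegation cycle are abstained, and a non-delegator casts all votes she holds (own plus delegated) for the same alternative or abstains them all. A strategy profile is neutral if each voter votes sincerely ($a$ at signal $a$, $b$ at signal $b$), abstains at both signals, or delegates to the same voter at both signals. The number of votes a voter holds is her own vote (if she does not delegate) plus all votes delegated to her directly or transitively. *)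

theory Defs
  imports Complex_Main "HOL-Library.FuncSet"
begin

(* Voters are 0..N-1. A neutral strategy of a voter is signal-independent in kind:
   vote sincerely (a at signal a, b at signal b), abstain at both signals,
   or delegate to the same voter j at both signals. States/signals: True = a, False = b. *)
datatype action = Sincere | Abstain | Deleg nat

definition neutral_profile :: "nat \<Rightarrow> (nat \<Rightarrow> action) \<Rightarrow> bool" where
  "neutral_profile N \<sigma> \<longleftrightarrow>
     (\<forall>i<N. \<forall>j. \<sigma> i = Deleg j \<longrightarrow> j < N \<and> j \<noteq> i)"

definition delegates :: "action \<Rightarrow> bool" where
  "delegates a \<longleftrightarrow> (\<exists>j. a = Deleg j)"

definition deleg_rel :: "nat \<Rightarrow> (nat \<Rightarrow> action) \<Rightarrow> (nat \<times> nat) set" where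
  "deleg_rel N \<sigma> = {(i, j). i < N \<and> \<sigma> i = Deleg j}"

definition held :: "nat \<Rightarrow> (nat \<Rightarrow> action) \<Rightarrow> nat \<Rightarrow> nat" where
  "held N \<sigma> i = (if delegates (\<sigma> i) then 0 else 1)
      + card {j. j < N \<and> j \<noteq> i \<and> (j, i) \<in> (deleg_rel N \<sigma>)\<^sup>+}"

(* votes cast for alternative x (True = A, False = B) under signal profile s;
   only sincere non-delegators cast votes; votes ending in a cycle or with an
   abstainer are abstained *)
definition votes_for :: "nat \<Rightarrow> (nat \<Rightarrow> action) \<Rightarrow> (nat \<Rightarrow> bool) \<Rightarrow> bool \<Rightarrow> nat" where
  "votes_for N \<sigma> s x = (\<Sum>i<N. if \<sigma> i = Sincere \<and> s i = x then held N \<sigma> i else 0)"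

definition win_prob :: "nat \<Rightarrow> (nat \<Rightarrow> action) \<Rightarrow> (nat \<Rightarrow> bool) \<Rightarrow> bool \<Rightarrow> real" where
  "win_prob N \<sigma> s w =
    (let A = votes_for N \<sigma> s True; B = votes_for N \<sigma> s False in
     if A > B then (if w then 1 else 0)
     else if B > A then (if w then 0 else 1)
     else 1/2)"

definition prec :: "real \<Rightarrow> real \<Rightarrow> nat \<Rightarrow> nat \<Rightarrow> real" where
  "prec q r e i = (if i = e then r else q)"

(* probability that the outcome matches the state; prior 1/2, conditionally
   independent signals with Pr(s_i = w | w) = prec i *)
definition P_correct :: "nat \<Rightarrow> real \<Rightarrow> real \<Rightarrow> nat \<Rightarrow> (nat \<Rightarrow> action) \<Rightarrow> real" where
  "P_correct N q r e \<sigma> =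
    (\<Sum>w\<in>(UNIV::bool set). (1/2) *
       (\<Sum>s\<in>({..<N} \<rightarrow>\<^sub>E (UNIV::bool set)).
          (\<Prod>i<N. if s i = w then prec q r e i else 1 - prec q r e i) * win_prob N \<sigma> s w))"

end

theory Submission
  imports Defs
begin

lemma func_sink_unique:
  assumes func: "\<And>x y z. (x,y) \<in> R \<Longrightarrow> (x,z) \<in> R \<Longrightarrow> y = z"
  shows "(j,i) \<in> R\<^sup>+ \<Longrightarrow> (j,i') \<in> R\<^sup>+ \<Longrightarrow> (\<forall>y. (i,y) \<notin> R) \<Longrightarrow> (\<forall>y. (i',y) \<notin> R) \<Longrightarrow> i = i'"
proof (induction arbitrary: i' rule: converse_trancl_induct)
  case (base y)
  from base.prems(1) obtain c where c: "(y,c) \<in> R" "(c,i') \<in> R\<^sup>*" by (metis tranclD)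
  have "c = i" using func c(1) base.hyps by blast
  with c(2) base.prems(2) show ?case by (metis converse_rtranclE)
next
  case (step y z)
  from step.prems(1) obtain c where c: "(y,c) \<in> R" "(c,i') \<in> R\<^sup>*" by (metis tranclD)
  have "c = z" using func c(1) step.hyps(1) by blast
  show ?case
  proof (cases "c = i'")
    case True
    with step.hyps(2) step.prems(3) \<open>c = z\<close> show ?thesis by (metis tranclD)
  next
    case False
    with c(2) have "(c,i') \<in> R\<^sup>+" by (metis rtranclD)
    with step.IH \<open>c = z\<close> step.prems show ?thesis by blast
  qed
qed

lemma held_sincere: "\<sigma> i = Sincere \<Longrightarrow> held N \<sigma> i = 1 + card {j. j < N \<and> j \<noteq> i \<and> (j, i) \<in> (deleg_rel N \<sigma>)\<^sup>+}"
  by (simp add: held_def delegates_def)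

lemma votes_ge: "card {i. i < N \<and> \<sigma> i = Sincere \<and> s i = x} \<le> votes_for N \<sigma> s x"
proof -
  have "card {i. i < N \<and> \<sigma> i = Sincere \<and> s i = x} = (\<Sum>i<N. if \<sigma> i = Sincere \<and> s i = x then 1 else 0)"
    by (simp add: sum.If_cases lessThan_def Collect_conj_eq Int_commute)
  also have "\<dots> \<le> votes_for N \<sigma> s x" unfolding votes_for_def
    by (intro sum_mono) (auto simp: held_sincere)
  finally show ?thesis .
qed

lemma votes_total:
  assumes "neutral_profile N \<sigma>"
  shows "votes_for N \<sigma> s True + votes_for N \<sigma> s False \<le> N"
proof -
  define Sn where "Sn = {i. i < N \<and> \<sigma> i = Sincere}"
  define D where "D i = {j. j < N \<and> j \<noteq> i \<and> (j, i) \<in> (deleg_rel N \<sigma>)\<^sup>+}" for i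
  have fin: "finite Sn" "\<And>i. finite (D i)" by (auto simp: Sn_def D_def)
  have "votes_for N \<sigma> s True + votes_for N \<sigma> s False = (\<Sum>i<N. if \<sigma> i = Sincere then held N \<sigma> i else 0)"
    unfolding votes_for_def sum.distrib[symmetric] by (intro sum.cong) auto
  also have "\<dots> = (\<Sum>i\<in>Sn. held N \<sigma> i)"
    by (simp add: Sn_def sum.If_cases lessThan_def Collect_conj_eq Int_commute)
  also have "\<dots> = (\<Sum>i\<in>Sn. 1 + card (D i))"
    by (intro sum.cong) (auto simp: Sn_def D_def held_sincere)
  also have "\<dots> = card Sn + card (\<Union>i\<in>Sn. D i)"
  proof -
    have "card (\<Union>i\<in>Sn. D i) = (\<Sum>i\<in>Sn. card (D i))"
    proof (rule card_UN_disjoint)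
      show "\<forall>i\<in>Sn. \<forall>j\<in>Sn. i \<noteq> j \<longrightarrow> D i \<inter> D j = {}"
      proof (intro ballI impI)
        fix i j assume ij: "i \<in> Sn" "j \<in> Sn" "i \<noteq> j"
        show "D i \<inter> D j = {}"
        proof (rule ccontr)
          assume "D i \<inter> D j \<noteq> {}"
          then obtain k where k: "(k,i) \<in> (deleg_rel N \<sigma>)\<^sup>+" "(k,j) \<in> (deleg_rel N \<sigma>)\<^sup>+"
            unfolding D_def by blast
          have "i = j"
            by (rule func_sink_unique[OF _ k]) (use ij in \<open>auto simp: deleg_rel_def Sn_def\<close>)
          with ij show False by simp
        qed
      qed
    qed (use fin in auto)
    then show ?thesis by (subst sum.distrib) simp
  qed
  also have "\<dots> = card (Sn \<union> (\<Union>i\<in>Sn. D i))"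
  proof -
    have "Sn \<inter> (\<Union>i\<in>Sn. D i) = {}"
    proof (rule ccontr)
      assume "Sn \<inter> (\<Union>i\<in>Sn. D i) \<noteq> {}"
      then obtain k i where "k \<in> Sn" "(k,i) \<in> (deleg_rel N \<sigma>)\<^sup>+" unfolding D_def by blast
      then show False by (auto simp: Sn_def deleg_rel_def dest: tranclD)
    qed
    then show ?thesis by (simp add: card_Un_disjoint fin)
  qed
  also have "\<dots> \<le> card {..<N}"
    by (intro card_mono) (auto simp: Sn_def D_def)
  finally show ?thesis by simp
qed

definition Rprof :: "nat \<Rightarrow> nat set \<Rightarrow> nat set \<Rightarrow> nat \<Rightarrow> nat \<Rightarrow> action" where
  "Rprof e S D k = (\<lambda>i. if i = e then (if k \<ge> 1 then Sincere else Abstain)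
      else if i \<in> S then Sincere else if i \<in> D then Deleg e else Abstain)"

locale Rsetup =
  fixes N e :: nat and S D :: "nat set" and k :: nat
  assumes eN: "e < N" and SN: "S \<subseteq> {..<N}" and eS: "e \<notin> S"
    and DN: "D \<subseteq> {..<N}" and eD: "e \<notin> D" and SD: "S \<inter> D = {}"
    and cD: "card D = k - 1" and k0: "k = 0 \<Longrightarrow> D = {}"
begin

abbreviation "R \<equiv> Rprof e S D k"

lemma finD: "finite D" using DN finite_subset by blast
lemma finS: "finite S" using SN finite_subset by blast

lemma R_neutral: "neutral_profile N R"
  using eN by (auto simp: neutral_profile_def Rprof_def)

lemma rel_eq: "deleg_rel N R = D \<times> {e}"
  using DN eD SD by (auto simp: deleg_rel_def Rprof_def split: if_splits)

lemma trancl_eq: "(deleg_rel N R)\<^sup>+ = D \<times> {e}"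
proof -
  have "trans (D \<times> {e})" using eD by (auto simp: trans_def)
  then show ?thesis by (simp add: rel_eq trancl_id)
qed

lemma held_e: "k \<ge> 1 \<Longrightarrow> held N R e = k"
proof -
  assume k: "k \<ge> 1"
  have "{j. j < N \<and> j \<noteq> e \<and> (j, e) \<in> (deleg_rel N R)\<^sup>+} = D"
    using DN eD by (auto simp: trancl_eq)
  then show ?thesis using k cD by (simp add: held_def delegates_def Rprof_def)
qed

lemma held_S: "i \<in> S \<Longrightarrow> held N R i = 1"
  unfolding held_def trancl_eq using eS eD SD by (auto simp: delegates_def Rprof_def)

lemma held_D: "i \<in> D \<Longrightarrow> held N R i = 0"
  unfolding held_def trancl_eq using eS eD SD by (auto simp: delegates_def Rprof_def)

lemma votes_R: "votes_for N R s x = (if s e = x then k else 0) + card {i\<in>S. s i = x}"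
proof -
  have "votes_for N R s x = (\<Sum>i\<in>insert e ({..<N} - {e}). if R i = Sincere \<and> s i = x then held N R i else 0)"
    unfolding votes_for_def using eN by (intro sum.cong) auto
  also have "\<dots> = (if R e = Sincere \<and> s e = x then held N R e else 0)
      + (\<Sum>i\<in>{..<N} - {e}. if R i = Sincere \<and> s i = x then held N R i else 0)"
    by (subst sum.insert) auto
  also have "(if R e = Sincere \<and> s e = x then held N R e else 0) = (if s e = x then k else 0)"
    using held_e by (auto simp: Rprof_def)
  also have "(\<Sum>i\<in>{..<N} - {e}. if R i = Sincere \<and> s i = x then held N R i else 0)
      = (\<Sum>i\<in>{..<N} - {e}. if i \<in> S \<and> s i = x then 1 else 0)"
    using held_S eS by (intro sum.cong) (auto simp: Rprof_def)
  also have "\<dots> = card {i\<in>S. s i = x}"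
  proof -
    have "{i\<in>S. s i = x} = ({..<N} - {e}) \<inter> {i. i \<in> S \<and> s i = x}" using SN eS by auto
    then show ?thesis by (simp add: sum.If_cases)
  qed
  finally show ?thesis .
qed

lemma R_held_le1: "i < N \<Longrightarrow> i \<noteq> e \<Longrightarrow> R i \<noteq> Abstain \<Longrightarrow> held N R i \<le> 1"
proof -
  assume "i < N" "i \<noteq> e" "R i \<noteq> Abstain"
  then have "i \<in> S \<or> i \<in> D" unfolding Rprof_def by (auto split: if_splits)
  then show ?thesis using held_S held_D by fastforce
qed

end

lemma kappa_exists:
  fixes \<rho> :: real and m N :: nat
  assumes "\<rho> \<ge> 0" "m < N" "odd N"
  shows "\<exists>k. k \<le> N - m \<and> odd (k + m)
     \<and> (\<forall>z::int. z > - int k \<longrightarrow> real_of_int z \<ge> -\<rho>)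
     \<and> (\<forall>z::int. - int (N - m) < z \<and> z < - int k \<longrightarrow> real_of_int z \<le> -\<rho>)"
proof -
  define f where "f = nat \<lfloor>\<rho>\<rfloor>"
  have f1: "real f \<le> \<rho>" "\<rho> < real f + 1" using assms(1) by (simp_all add: f_def)
  define k1 where "k1 = (if odd (f + m) then f else f + 1)"
  define k where "k = min (N - m) k1"
  have par: "odd (k + m)" using assms by (auto simp: k_def k1_def min_def)
  have A: "\<forall>z::int. z > - int k \<longrightarrow> real_of_int z \<ge> -\<rho>"
  proof (intro allI impI)
    fix z :: int assume "z > - int k"
    then have "z \<ge> 1 - int k1" by (simp add: k_def)
    then have "real_of_int z \<ge> 1 - real k1" by linarith
    then show "real_of_int z \<ge> -\<rho>" using f1 by (auto simp: k1_def split: if_splits)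
  qed
  have B: "\<forall>z::int. - int (N - m) < z \<and> z < - int k \<longrightarrow> real_of_int z \<le> -\<rho>"
  proof (intro allI impI)
    fix z :: int assume z: "- int (N - m) < z \<and> z < - int k"
    then have "k = k1" by (auto simp: k_def min_def split: if_splits)
    with z have "z \<le> - int k1 - 1" by simp
    then have "real_of_int z \<le> - real k1 - 1" by linarith
    then show "real_of_int z \<le> -\<rho>" using f1 by (auto simp: k1_def split: if_splits)
  qed
  show ?thesis using par A B by (intro exI[of _ k]) (auto simp: k_def)
qed

definition wp :: "nat \<Rightarrow> nat \<Rightarrow> real" where
  "wp a b = (if a > b then 1 else if b > a then 0 else 1/2)"

lemma pointwise:
  fixes L M AT AF g :: real and N m k na nb :: nat and se :: bool
  assumes oddN: "odd N" and km: "k \<le> N - m" "odd (k + m)" and mN: "m < N"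
    and A: "\<forall>z::int. z > - int k \<longrightarrow> L + real_of_int z * M \<ge> 0"
    and B: "\<forall>z::int. - int (N - m) < z \<and> z < - int k \<longrightarrow> L + real_of_int z * M \<le> 0"
    and nab: "na + nb = m"
    and g01: "0 \<le> g" "g \<le> 1" and g1: "2 * na > N \<Longrightarrow> g = 1" and g0: "2 * nb > N \<Longrightarrow> g = 0"
    and hT: "se \<Longrightarrow> L + (real na - real nb) * M \<ge> 0 \<Longrightarrow> AT \<ge> AF"
            "se \<Longrightarrow> L + (real na - real nb) * M \<le> 0 \<Longrightarrow> AT \<le> AF"
    and hF: "\<not> se \<Longrightarrow> - L + (real na - real nb) * M \<ge> 0 \<Longrightarrow> AT \<ge> AF"
            "\<not> se \<Longrightarrow> - L + (real na - real nb) * M \<le> 0 \<Longrightarrow> AT \<le> AF"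
  shows "(wp ((if se then k else 0) + na) ((if \<not> se then k else 0) + nb) - g) * (AT - AF) \<ge> 0"
proof -
  let ?a = "(if se then k else 0) + na" and ?b = "(if \<not> se then k else 0) + nb"
  have "?a \<noteq> ?b"
  proof
    assume "?a = ?b"
    then have "even (k + m)" using nab by (cases se) auto
    with km show False by simp
  qed
  then consider "?a > ?b" | "?b > ?a" by linarith
  then show ?thesis
  proof cases
    case 1
    then have w: "wp ?a ?b = 1" by (simp add: wp_def)
    show ?thesis
    proof (cases "2 * na > N")
      case True then show ?thesis using g1 w by simp
    next
      case False
      have "AT \<ge> AF"
      proof (cases se)
        case True
        with 1 have "int na - int nb > - int k" by simp
        with A have "L + real_of_int (int na - int nb) * M \<ge> 0" by blast
        then show ?thesis using hT True by simp
      next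
        case se: False
        with 1 have z1: "int nb - int na < - int k" by simp
        have "int nb - int na \<noteq> - int (N - m)" using False nab oddN mN by presburger
        moreover have "int nb - int na \<ge> - int (N - m)" using False nab mN by linarith
        ultimately have "- int (N - m) < int nb - int na" by linarith
        with z1 B have "L + real_of_int (int nb - int na) * M \<le> 0" by blast
        then have "- L + (real na - real nb) * M \<ge> 0" by (simp add: algebra_simps)
        then show ?thesis using hF se by simp
      qed
      then show ?thesis using w g01 by simp
    qed
  next
    case 2
    then have w: "wp ?a ?b = 0" by (simp add: wp_def)
    show ?thesis
    proof (cases "2 * nb > N")
      case True then show ?thesis using g0 w by simp
    next
      case False
      have "AT \<le> AF"
      proof (cases se)
        case se: True
        with 2 have z1: "int na - int nb < - int k" by simp
        have "int na - int nb \<noteq> - int (N - m)" using False nab oddN mN by presburger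
        moreover have "int na - int nb \<ge> - int (N - m)" using False nab mN by linarith
        ultimately have "- int (N - m) < int na - int nb" by linarith
        with z1 B have "L + real_of_int (int na - int nb) * M \<le> 0" by blast
        then show ?thesis using hT se by simp
      next
        case se: False
        with 2 have "int nb - int na > - int k" by simp
        with A have "L + real_of_int (int nb - int na) * M \<ge> 0" by blast
        then have "- L + (real na - real nb) * M \<le> 0" by (simp add: algebra_simps)
        then show ?thesis using hF se by simp
      qed
      then show ?thesis using w g01 by (simp add: mult_nonneg_nonpos)
    qed
  qed
qed

definition Pw :: "nat \<Rightarrow> real \<Rightarrow> real \<Rightarrow> nat \<Rightarrow> (nat \<Rightarrow> bool) \<Rightarrow> bool \<Rightarrow> real" where
  "Pw N q r e s w = (\<Prod>i<N. if s i = w then prec q r e i else 1 - prec q r e i)"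

lemma win_prob_wp: "win_prob N \<sigma> s True = wp (votes_for N \<sigma> s True) (votes_for N \<sigma> s False)"
  by (simp add: win_prob_def wp_def Let_def)

lemma win_prob_False: "win_prob N \<sigma> s False = 1 - win_prob N \<sigma> s True"
  by (simp add: win_prob_def Let_def)

lemma P_alt: "P_correct N q r e \<sigma> = (1/2) * (\<Sum>s\<in>({..<N} \<rightarrow>\<^sub>E (UNIV::bool set)).
   Pw N q r e s True * win_prob N \<sigma> s True + Pw N q r e s False * (1 - win_prob N \<sigma> s True))"
  unfolding P_correct_def UNIV_bool Pw_def
  by (simp add: win_prob_False sum.distrib distrib_left)

lemma sum_involution_nonneg:
  fixes F :: "'a \<Rightarrow> real"
  assumes fin: "finite A" and hA: "\<And>x. x \<in> A \<Longrightarrow> h x \<in> A" and hh: "\<And>x. x \<in> A \<Longrightarrow> h (h x) = x"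
    and pos: "\<And>x. x \<in> A \<Longrightarrow> F x + F (h x) \<ge> 0"
  shows "sum F A \<ge> 0"
proof -
  have "sum F A = sum (F \<circ> h) A"
    by (rule sum.reindex_bij_witness[of _ h h]) (auto simp: hA hh)
  then have "2 * sum F A = (\<Sum>x\<in>A. F x + F (h x))" by (simp add: sum.distrib)
  also have "\<dots> \<ge> 0" by (intro sum_nonneg pos)
  finally show ?thesis by simp
qed

lemma ln_compare:
  fixes a b q :: real and na nb :: nat
  assumes "a > 0" "b > 0" "0 < q" "q < 1"
  shows "a * q ^ na * (1 - q) ^ nb \<ge> b * q ^ nb * (1 - q) ^ na \<longleftrightarrow>
         ln a - ln b + (real na - real nb) * (ln q - ln (1 - q)) \<ge> 0"
    and "a * q ^ na * (1 - q) ^ nb \<le> b * q ^ nb * (1 - q) ^ na \<longleftrightarrow>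
         ln a - ln b + (real na - real nb) * (ln q - ln (1 - q)) \<le> 0"
proof -
  have p: "a * q ^ na * (1 - q) ^ nb > 0" "b * q ^ nb * (1 - q) ^ na > 0" using assms by auto
  have l1: "ln (a * q ^ na * (1 - q) ^ nb) = ln a + real na * ln q + real nb * ln (1 - q)"
    using assms by (simp add: ln_mult ln_realpow)
  have l2: "ln (b * q ^ nb * (1 - q) ^ na) = ln b + real nb * ln q + real na * ln (1 - q)"
    using assms by (simp add: ln_mult ln_realpow)
  have ex: "(real na - real nb) * (ln q - ln (1-q)) = real na * ln q + real nb * ln(1-q) - real nb * ln q - real na * ln (1-q)"
    by (simp add: algebra_simps)
  have c1: "b * q ^ nb * (1 - q) ^ na \<le> a * q ^ na * (1 - q) ^ nb \<longleftrightarrow> ln (b * q ^ nb * (1 - q) ^ na) \<le> ln (a * q ^ na * (1 - q) ^ nb)"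
    using p by (simp only: ln_le_cancel_iff)
  have c2: "a * q ^ na * (1 - q) ^ nb \<le> b * q ^ nb * (1 - q) ^ na \<longleftrightarrow> ln (a * q ^ na * (1 - q) ^ nb) \<le> ln (b * q ^ nb * (1 - q) ^ na)"
    using p by (simp only: ln_le_cancel_iff)
  show "a * q ^ na * (1 - q) ^ nb \<ge> b * q ^ nb * (1 - q) ^ na \<longleftrightarrow>
         ln a - ln b + (real na - real nb) * (ln q - ln (1 - q)) \<ge> 0"
    unfolding c1 l1 l2 ex by linarith
  show "a * q ^ na * (1 - q) ^ nb \<le> b * q ^ nb * (1 - q) ^ na \<longleftrightarrow>
         ln a - ln b + (real na - real nb) * (ln q - ln (1 - q)) \<le> 0"
    unfolding c2 l1 l2 ex by linarith
qed

lemma votes_cong: "(\<And>i. i < N \<Longrightarrow> \<sigma> i = Sincere \<Longrightarrow> s' i = s i) \<Longrightarrow> votes_for N \<sigma> s' x = votes_for N \<sigma> s x"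
  unfolding votes_for_def by (intro sum.cong) auto

lemma prod_if_pow:
  fixes q :: real
  assumes "finite S"
  shows "(\<Prod>i\<in>S. if s i = w then q else 1 - q) = q ^ card {i\<in>S. s i = w} * (1 - q) ^ card {i\<in>S. s i \<noteq> w}"
proof -
  have "(\<Prod>i\<in>S. if s i = w then q else 1 - q) = (\<Prod>i\<in>S \<inter> {x. s x = w}. q) * (\<Prod>i\<in>S \<inter> - {x. s x = w}. 1 - q)"
    using assms by (rule prod.If_cases)
  also have "S \<inter> {x. s x = w} = {i\<in>S. s i = w}" by auto
  also have "S \<inter> - {x. s x = w} = {i\<in>S. s i \<noteq> w}" by auto
  finally show ?thesis by simp
qed

lemma win01: "0 \<le> win_prob N \<sigma> s w" "win_prob N \<sigma> s w \<le> 1"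
  by (auto simp: win_prob_def Let_def)

lemma improve:
  fixes N e :: nat and q r :: real
  assumes oddN: "odd N" and eN: "e < N" and q: "1/2 < q" "q < r" "r < 1"
    and tau: "neutral_profile N \<tau>"
  shows "\<exists>\<sigma>. neutral_profile N \<sigma> \<and> P_correct N q r e \<tau> \<le> P_correct N q r e \<sigma>
           \<and> (\<forall>i<N. i \<noteq> e \<and> \<sigma> i \<noteq> Abstain \<longrightarrow> held N \<sigma> i \<le> 1)"
proof -
  define S where "S = {i. i < N \<and> i \<noteq> e \<and> \<tau> i = Sincere}"
  define m where "m = card S"
  define U where "U = insert e S"
  have SN: "S \<subseteq> {..<N} - {e}" by (auto simp: S_def)
  have finS: "finite S" by (simp add: S_def)
  have eS: "e \<notin> S" by (simp add: S_def)
  have "m \<le> card ({..<N} - {e})" unfolding m_def by (rule card_mono[OF _ SN]) simp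
  then have mN1: "m \<le> N - 1" using eN by simp
  then have mN: "m < N" using eN by linarith
  define L where "L = ln r - ln (1 - r)"
  define M where "M = ln q - ln (1 - q)"
  have Mpos: "M > 0" unfolding M_def using q by simp
  have Lpos: "L > 0" unfolding L_def using q by simp
  obtain k where k: "k \<le> N - m" "odd (k + m)"
     and kA: "\<forall>z::int. z > - int k \<longrightarrow> real_of_int z \<ge> -(L/M)"
     and kB: "\<forall>z::int. - int (N - m) < z \<and> z < - int k \<longrightarrow> real_of_int z \<le> -(L/M)"
    using kappa_exists[of "L/M" m N] Lpos Mpos mN oddN by auto
  have conv1: "L + x * M \<ge> 0" if "x \<ge> -(L/M)" for x
  proof -
    have "x * M \<ge> -(L/M) * M" using that Mpos by (intro mult_right_mono) auto
    then show ?thesis using Mpos by simp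
  qed
  have conv2: "L + x * M \<le> 0" if "x \<le> -(L/M)" for x
  proof -
    have "x * M \<le> -(L/M) * M" using that Mpos by (intro mult_right_mono) auto
    then show ?thesis using Mpos by simp
  qed
  have A: "\<forall>z::int. z > - int k \<longrightarrow> L + real_of_int z * M \<ge> 0" using kA conv1 by blast
  have B: "\<forall>z::int. - int (N - m) < z \<and> z < - int k \<longrightarrow> L + real_of_int z * M \<le> 0" using kB conv2 by blast
  define C where "C = {..<N} - U"
  have cC: "card C = N - 1 - m"
  proof -
    have "card C = card {..<N} - card U" unfolding C_def
      by (rule card_Diff_subset) (use SN eN in \<open>auto simp: U_def finS\<close>)
    then show ?thesis using finS eS by (simp add: U_def m_def)
  qed
  have "k - 1 \<le> card C" using cC k(1) by linarith
  then obtain D where D: "D \<subseteq> C" "card D = k - 1" "finite D"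
    by (metis obtain_subset_with_card_n)
  interpret Rs: Rsetup N e S D k
  proof
    show "e < N" by fact
    show "S \<subseteq> {..<N}" using SN by auto
    show "e \<notin> S" by fact
    show "D \<subseteq> {..<N}" using D by (auto simp: C_def)
    show "e \<notin> D" using D by (auto simp: C_def U_def)
    show "S \<inter> D = {}" using D by (auto simp: C_def U_def)
    show "card D = k - 1" by fact
    show "k = 0 \<Longrightarrow> D = {}" using D by auto
  qed
  define \<sigma> where "\<sigma> = Rprof e S D k"
  define g where "g \<rho> s = win_prob N \<rho> s True" for \<rho> s
  define PS where "PS = ({..<N} \<rightarrow>\<^sub>E (UNIV::bool set))"
  define F where "F s = (Pw N q r e s True - Pw N q r e s False) * (g \<sigma> s - g \<tau> s)" for s
  have diff: "P_correct N q r e \<sigma> - P_correct N q r e \<tau> = (1/2) * sum F PS"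
    unfolding P_alt PS_def F_def g_def
    by (simp add: sum_subtractf[symmetric] right_diff_distrib[symmetric] algebra_simps)
  define h where "h s = (\<lambda>i. if i < N \<and> i \<notin> U then \<not> s i else s i)" for s :: "nat \<Rightarrow> bool"
  have "sum F PS \<ge> 0"
  proof (rule sum_involution_nonneg[of PS h])
    show "finite PS" by (simp add: PS_def finite_PiE)
    show "h s \<in> PS" if "s \<in> PS" for s
      using that by (auto simp: PS_def h_def PiE_iff extensional_def)
    show "h (h s) = s" if "s \<in> PS" for s by (auto simp: h_def)
    show "F s + F (h s) \<ge> 0" if "s \<in> PS" for s
proof -
      define f where "f (s'::nat\<Rightarrow>bool) (w::bool) (i::nat) = (if s' i = w then prec q r e i else 1 - prec q r e i)" for s' w i
      define AU where "AU (s'::nat\<Rightarrow>bool) (w::bool) = (\<Prod>i\<in>U. f s' w i)" for s' w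
      define BV where "BV (s'::nat\<Rightarrow>bool) (w::bool) = (\<Prod>i\<in>{..<N} - U. f s' w i)" for s' w
      have UN: "U \<subseteq> {..<N}" using SN eN by (auto simp: U_def)
      have fact1: "Pw N q r e s' w = BV s' w * AU s' w" for s' w
        unfolding Pw_def AU_def BV_def f_def by (rule prod.subset_diff[OF UN]) simp
      have fact2: "AU (h s) w = AU s w" for w
        unfolding AU_def f_def h_def by (intro prod.cong) auto
      have fact3: "BV (h s) w = BV s (\<not> w)" for w
        unfolding BV_def f_def h_def prec_def using U_def by (intro prod.cong) auto
      have sincU: "i \<in> U" if "i < N" "\<sigma> i = Sincere \<or> \<tau> i = Sincere" for i
        using that by (auto simp: U_def S_def \<sigma>_def Rprof_def split: if_splits)
      have fact4: "g \<rho> (h s) = g \<rho> s" if "\<rho> = \<sigma> \<or> \<rho> = \<tau>" for \<rho>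
        unfolding g_def win_prob_wp using that
        by (subst (1 2) votes_cong[of N \<rho> "h s" s]) (auto simp: h_def sincU)
      have q01: "0 < q" "q < 1" "0 < r" "r < 1" using q by auto
      have fpos: "f s' w i \<ge> 0" for s' w i using q01 by (auto simp: f_def prec_def)
      have Bpos: "BV s True + BV s False \<ge> 0" unfolding BV_def using fpos
        by (intro add_nonneg_nonneg prod_nonneg) auto
      have AUf: "AU s w = (if s e = w then r else 1 - r) * (q ^ card {i\<in>S. s i = w} * (1 - q) ^ card {i\<in>S. s i \<noteq> w})" for w
      proof -
        have "AU s w = f s w e * (\<Prod>i\<in>S. f s w i)" unfolding AU_def U_def using finS eS by simp
        also have "(\<Prod>i\<in>S. f s w i) = (\<Prod>i\<in>S. if s i = w then q else 1 - q)"
          using eS by (intro prod.cong) (auto simp: f_def prec_def)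
        also have "\<dots> = q ^ card {i\<in>S. s i = w} * (1 - q) ^ card {i\<in>S. s i \<noteq> w}"
          by (rule prod_if_pow[OF finS])
        also have "f s w e = (if s e = w then r else 1 - r)" by (simp add: f_def prec_def)
        finally show ?thesis .
      qed
      define na where "na = card {i\<in>S. s i}"
      define nb where "nb = card {i\<in>S. \<not> s i}"
      have nab: "na + nb = m"
      proof -
        have "{i\<in>S. s i} \<union> {i\<in>S. \<not> s i} = S" by auto
        moreover have "card ({i\<in>S. s i} \<union> {i\<in>S. \<not> s i}) = na + nb"
          unfolding na_def nb_def by (rule card_Un_disjoint) (use finS in auto)
        ultimately show ?thesis by (simp add: m_def)
      qed
      have AT: "AU s True = (if s e then r else 1 - r) * q ^ na * (1 - q) ^ nb"
        using AUf[of True] by (simp add: na_def nb_def)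
      have AF: "AU s False = (if s e then 1 - r else r) * q ^ nb * (1 - q) ^ na"
        using AUf[of False] by (simp add: na_def nb_def)
      have gs: "g \<sigma> s = wp ((if s e then k else 0) + na) ((if \<not> s e then k else 0) + nb)"
        unfolding g_def win_prob_wp \<sigma>_def Rs.votes_R by (simp add: na_def nb_def)
      have tot: "votes_for N \<tau> s True + votes_for N \<tau> s False \<le> N" by (rule votes_total[OF tau])
      have naT: "na \<le> votes_for N \<tau> s True"
      proof -
        have "na \<le> card {i. i < N \<and> \<tau> i = Sincere \<and> s i = True}"
          unfolding na_def by (rule card_mono) (auto simp: S_def)
        then show ?thesis using votes_ge[of N \<tau> s True] by linarith
      qed
      have nbF: "nb \<le> votes_for N \<tau> s False"
      proof -
        have "nb \<le> card {i. i < N \<and> \<tau> i = Sincere \<and> s i = False}"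
          unfolding nb_def by (rule card_mono) (auto simp: S_def)
        then show ?thesis using votes_ge[of N \<tau> s False] by linarith
      qed
      have key: "(g \<sigma> s - g \<tau> s) * (AU s True - AU s False) \<ge> 0"
        unfolding gs
      proof (rule pointwise[OF oddN k mN A B nab])
        show "0 \<le> g \<tau> s" "g \<tau> s \<le> 1" unfolding g_def by (rule win01)+
        show "g \<tau> s = 1" if "2 * na > N"
          using that tot naT unfolding g_def win_prob_wp wp_def by auto
        show "g \<tau> s = 0" if "2 * nb > N"
          using that tot nbF unfolding g_def win_prob_wp wp_def by auto
        show "AU s True \<ge> AU s False" if "s e" "L + (real na - real nb) * M \<ge> 0"
          using that ln_compare(1)[where a=r and b="1 - r" and q=q and na=na and nb=nb] q01 unfolding AT AF L_def M_def by simp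
        show "AU s True \<le> AU s False" if "s e" "L + (real na - real nb) * M \<le> 0"
          using that ln_compare(2)[where a=r and b="1 - r" and q=q and na=na and nb=nb] q01 unfolding AT AF L_def M_def by simp
        show "AU s True \<ge> AU s False" if "\<not> s e" "- L + (real na - real nb) * M \<ge> 0"
          using that ln_compare(1)[where b=r and a="1 - r" and q=q and na=na and nb=nb] q01 unfolding AT AF L_def M_def by simp
        show "AU s True \<le> AU s False" if "\<not> s e" "- L + (real na - real nb) * M \<le> 0"
          using that ln_compare(2)[where b=r and a="1 - r" and q=q and na=na and nb=nb] q01 unfolding AT AF L_def M_def by simp
      qed
      have "F s + F (h s) = ((g \<sigma> s - g \<tau> s) * (AU s True - AU s False)) * (BV s True + BV s False)"
        unfolding F_def fact1 fact2 fact3 fact4[OF disjI1[OF refl]] fact4[OF disjI2[OF refl]]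
        by (simp add: algebra_simps)
      also have "\<dots> \<ge> 0" using key Bpos by simp
      finally show ?thesis .
    qed
  qed
  then have "P_correct N q r e \<tau> \<le> P_correct N q r e \<sigma>" using diff by simp
  then show ?thesis
    using Rs.R_neutral Rs.R_held_le1 unfolding \<sigma>_def by blast
qed

definition trunc :: "nat \<Rightarrow> (nat \<Rightarrow> action) \<Rightarrow> nat \<Rightarrow> action" where
  "trunc N \<tau> = (\<lambda>i. if i < N then \<tau> i else undefined)"

lemma rel_trunc: "deleg_rel N (trunc N \<tau>) = deleg_rel N \<tau>"
  by (auto simp: deleg_rel_def trunc_def)

lemma held_trunc: "i < N \<Longrightarrow> held N (trunc N \<tau>) i = held N \<tau> i"
  by (simp add: held_def rel_trunc) (simp add: trunc_def)

lemma votes_trunc: "votes_for N (trunc N \<tau>) s x = votes_for N \<tau> s x"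
  unfolding votes_for_def
proof (intro sum.cong refl)
  fix i assume "i \<in> {..<N}"
  then have "trunc N \<tau> i = \<tau> i" "held N (trunc N \<tau>) i = held N \<tau> i"
    using held_trunc[of i N \<tau>] by (simp_all add: trunc_def)
  then show "(if trunc N \<tau> i = Sincere \<and> s i = x then held N (trunc N \<tau>) i else 0) =
    (if \<tau> i = Sincere \<and> s i = x then held N \<tau> i else 0)" by simp
qed

lemma P_trunc: "P_correct N q r e (trunc N \<tau>) = P_correct N q r e \<tau>"
  unfolding P_correct_def win_prob_def votes_trunc ..

lemma neutral_trunc: "neutral_profile N (trunc N \<tau>) = neutral_profile N \<tau>"
  by (simp add: neutral_profile_def trunc_def)

theorem lemma7:
  fixes N e :: nat and q r :: real
  assumes "odd N" and "e < N" and "1/2 < q" and "q < r" and "r < 1"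
  shows "\<exists>\<sigma>. neutral_profile N \<sigma>
           \<and> (\<forall>\<tau>. neutral_profile N \<tau> \<longrightarrow> P_correct N q r e \<tau> \<le> P_correct N q r e \<sigma>)
           \<and> (\<forall>i<N. i \<noteq> e \<and> \<sigma> i \<noteq> Abstain \<longrightarrow> held N \<sigma> i \<le> 1)"
proof -
  define Act where "Act = {Sincere, Abstain} \<union> Deleg ` {..<N}"
  define FS where "FS = ({..<N} \<rightarrow>\<^sub>E Act) \<inter> {\<tau>. neutral_profile N \<tau>}"
  have finA: "finite Act" unfolding Act_def by simp
  have finFS: "finite FS" unfolding FS_def using finite_PiE[OF finite_lessThan[of N], of "\<lambda>_. Act"] finA
    by (simp add: finite_Int)
  have inFS: "trunc N \<tau> \<in> FS" if nt: "neutral_profile N \<tau>" for \<tau>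
  proof -
    have act: "\<tau> i \<in> Act" if iN: "i < N" for i
    proof (cases "\<tau> i")
      case Sincere then show ?thesis by (simp add: Act_def)
    next
      case Abstain then show ?thesis by (simp add: Act_def)
    next
      case (Deleg j)
      then have "j < N" using nt iN unfolding neutral_profile_def by blast
      then show ?thesis using Deleg by (simp add: Act_def)
    qed
    have "trunc N \<tau> \<in> {..<N} \<rightarrow>\<^sub>E Act"
      unfolding PiE_iff extensional_def trunc_def using act by simp
    moreover have "neutral_profile N (trunc N \<tau>)" using nt neutral_trunc by blast
    ultimately show ?thesis unfolding FS_def by blast
  qed
  have neFS: "FS \<noteq> {}"
  proof -
    have "neutral_profile N (\<lambda>_. Sincere)" by (simp add: neutral_profile_def)
    then show ?thesis using inFS by blast
  qed
  define V where "V = (P_correct N q r e) ` FS"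
  have "Max V \<in> V" unfolding V_def using finFS neFS by (intro Max_in) auto
  then obtain t where t: "t \<in> FS" "P_correct N q r e t = Max V" unfolding V_def by (metis imageE)
  have tmax: "P_correct N q r e \<tau> \<le> P_correct N q r e t" if "neutral_profile N \<tau>" for \<tau>
  proof -
    have "P_correct N q r e (trunc N \<tau>) \<le> Max V"
      unfolding V_def using finFS inFS[OF that] by (intro Max_ge) auto
    then show ?thesis using t by (simp add: P_trunc)
  qed
  have "neutral_profile N t" using t by (simp add: FS_def)
  from improve[OF assms this] obtain \<sigma> where
    \<sigma>: "neutral_profile N \<sigma>" "P_correct N q r e t \<le> P_correct N q r e \<sigma>"
       "\<forall>i<N. i \<noteq> e \<and> \<sigma> i \<noteq> Abstain \<longrightarrow> held N \<sigma> i \<le> 1" by blast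
  show ?thesis
  proof (intro exI conjI allI impI)
    show "neutral_profile N \<sigma>" by (rule \<sigma>(1))
    show "P_correct N q r e \<tau> \<le> P_correct N q r e \<sigma>" if "neutral_profile N \<tau>" for \<tau>
      using tmax[OF that] \<sigma>(2) by linarith
    show "held N \<sigma> i \<le> 1" if "i < N" "i \<noteq> e \<and> \<sigma> i \<noteq> Abstain" for i
      using \<sigma>(3) that by blast
  qed
qed

end
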